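(* Let $G$ be a locally finite discrete group and $1<p<\infty$, and suppose the set $B_1=\{f\in\ell^1(G):\|f\|_{A_p(G)}\le 1\}$ is bounded in the $\ell^1$-norm. Then $G$ is finite.
   Context: A group is locally finite if every finitely generated subgroup is finite. For a discrete group $G$ and $1<p<\infty$, $\frac1p+\frac1q=1$, $A_p(G)$ is the space of functions $u=\sum_{i=1}^\infty g_i*f_i^{\vee}$ with $f_i\in \ell_p(G)$, $g_i\in \ell_q(G)$, $\sum_i\|f_i\|_p\|g_i\|_q<\infty$, where $f^{\vee}(x)=f(x^{-1})$, normed by $\|u\|_{A_p(G)}=\inf\{\sum_i\|f_i\|_p\|g_i\|_q\}$ over all such representations; $\ell^1(G)\subseteq A_p(G)$. *)

theory Defs
  imports "HOL-Analysis.Analysis" "HOL-Algebra.Generated_Groups"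
begin

definition locally_finite_group :: "('a, 'b) monoid_scheme \<Rightarrow> bool" where
  "locally_finite_group G \<longleftrightarrow>
     (\<forall>S. S \<subseteq> carrier G \<longrightarrow> finite S \<longrightarrow> finite (generate G S))"

text \<open>Functions on the (discrete) group, complex valued; only values on the carrier matter.\<close>
definition in_lp :: "('a, 'b) monoid_scheme \<Rightarrow> real \<Rightarrow> ('a \<Rightarrow> complex) \<Rightarrow> bool" where
  "in_lp G p f \<longleftrightarrow> (\<lambda>x. norm (f x) powr p) summable_on carrier G"

definition lp_norm :: "('a, 'b) monoid_scheme \<Rightarrow> real \<Rightarrow> ('a \<Rightarrow> complex) \<Rightarrow> real" where
  "lp_norm G p f = (\<Sum>\<^sub>\<infinity>x\<in>carrier G. norm (f x) powr p) powr (1 / p)"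

definition check_fun :: "('a, 'b) monoid_scheme \<Rightarrow> ('a \<Rightarrow> complex) \<Rightarrow> 'a \<Rightarrow> complex" where
  "check_fun G f x = f (inv\<^bsub>G\<^esub> x)"

definition conv :: "('a, 'b) monoid_scheme \<Rightarrow> ('a \<Rightarrow> complex) \<Rightarrow> ('a \<Rightarrow> complex) \<Rightarrow> 'a \<Rightarrow> complex" where
  "conv G g h x = (\<Sum>\<^sub>\<infinity>y\<in>carrier G. g y * h (inv\<^bsub>G\<^esub> y \<otimes>\<^bsub>G\<^esub> x))"

definition Ap_rep :: "('a, 'b) monoid_scheme \<Rightarrow> real \<Rightarrow> ('a \<Rightarrow> complex)
    \<Rightarrow> (nat \<Rightarrow> 'a \<Rightarrow> complex) \<Rightarrow> (nat \<Rightarrow> 'a \<Rightarrow> complex) \<Rightarrow> bool" where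
  "Ap_rep G p u f g \<longleftrightarrow>
     (let q = p / (p - 1) in
       (\<forall>i. in_lp G p (f i) \<and> in_lp G q (g i)) \<and>
       summable (\<lambda>i. lp_norm G p (f i) * lp_norm G q (g i)) \<and>
       (\<forall>x\<in>carrier G. u x = (\<Sum>i. conv G (g i) (check_fun G (f i)) x)))"

definition Ap_norm :: "('a, 'b) monoid_scheme \<Rightarrow> real \<Rightarrow> ('a \<Rightarrow> complex) \<Rightarrow> real" where
  "Ap_norm G p u = Inf {(\<Sum>i. lp_norm G p (f i) * lp_norm G (p / (p - 1)) (g i)) | f g. Ap_rep G p u f g}"

definition l1_norm :: "('a, 'b) monoid_scheme \<Rightarrow> ('a \<Rightarrow> complex) \<Rightarrow> real" where
  "l1_norm G f = (\<Sum>\<^sub>\<infinity>x\<in>carrier G. norm (f x))"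

end

theory Submission
  imports Defs
begin

lemma fin_supp_infsum:
  assumes "finite H" "H \<subseteq> A" "\<And>x. x \<in> A - H \<Longrightarrow> f x = 0"
  shows "infsum f A = sum f H" "f summable_on A"
proof -
  have "infsum f A = infsum f H"
    by (rule infsum_cong_neutral) (use assms in auto)
  then show "infsum f A = sum f H" using assms by simp
  have "f summable_on H" using assms by simp
  then show "f summable_on A"
    using summable_on_cong_neutral[of A H f f] assms by auto
qed

lemma subgroup_fact:
  assumes "group G" "subgroup H G" "x \<in> carrier G" "y \<in> H"
  shows "(inv\<^bsub>G\<^esub> (inv\<^bsub>G\<^esub> y \<otimes>\<^bsub>G\<^esub> x) \<in> H) = (x \<in> H)"
proof -
  interpret group G by fact
  have yc: "y \<in> carrier G" using assms subgroup.subset by blast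
  have e: "inv\<^bsub>G\<^esub> (inv\<^bsub>G\<^esub> y \<otimes>\<^bsub>G\<^esub> x) = inv\<^bsub>G\<^esub> x \<otimes>\<^bsub>G\<^esub> y"
    using yc assms(3) by (simp add: inv_mult_group)
  show ?thesis
  proof
    assume "inv\<^bsub>G\<^esub> (inv\<^bsub>G\<^esub> y \<otimes>\<^bsub>G\<^esub> x) \<in> H"
    hence "inv\<^bsub>G\<^esub> x \<otimes>\<^bsub>G\<^esub> y \<in> H" using e by simp
    hence "(inv\<^bsub>G\<^esub> x \<otimes>\<^bsub>G\<^esub> y) \<otimes>\<^bsub>G\<^esub> inv\<^bsub>G\<^esub> y \<in> H"
      using assms subgroup.m_closed subgroup.m_inv_closed by metis
    hence "inv\<^bsub>G\<^esub> x \<in> H" using yc assms(3) by (simp add: m_assoc)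
    thus "x \<in> H" using assms(2,3) subgroup.m_inv_closed by fastforce
  next
    assume "x \<in> H"
    thus "inv\<^bsub>G\<^esub> (inv\<^bsub>G\<^esub> y \<otimes>\<^bsub>G\<^esub> x) \<in> H"
      using assms subgroup.m_closed subgroup.m_inv_closed by metis
  qed
qed

lemma lp_norm_nonneg: "lp_norm G p f \<ge> 0"
  unfolding lp_norm_def by simp

lemma key:
  assumes "group G" "subgroup H G" "finite H" "1 < p"
  defines "u \<equiv> (\<lambda>x. if x \<in> H then (1::complex) else 0)"
  shows "in_lp G 1 u" "Ap_norm G p u \<le> 1" "l1_norm G u = real (card H)"
proof -
  have Hc: "H \<subseteq> carrier G" using assms subgroup.subset by blast
  have Hne: "H \<noteq> {}" using assms subgroup.one_closed by blast
  have cpos: "card H > 0" using Hne assms(3) by (simp add: card_gt_0_iff)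
  define n where "n = real (card H)"
  have npos: "n > 0" using cpos n_def by simp
  show "in_lp G 1 u" unfolding in_lp_def
    by (rule fin_supp_infsum(2)[OF assms(3) Hc]) (auto simp: u_def)
  show "l1_norm G u = real (card H)" unfolding l1_norm_def
    by (subst fin_supp_infsum(1)[OF assms(3) Hc]) (auto simp: u_def)
  define q where "q = p / (p - 1)"
  have q1: "1/p + 1/q = 1" using assms(4) unfolding q_def by (simp add: field_simps)
  have qpos: "q > 0" using assms(4) unfolding q_def by simp
  define g0 where "g0 = (\<lambda>x. if x \<in> H then complex_of_real (1/n) else 0)"
  define f where "f = (\<lambda>i::nat. if i = 0 then u else (\<lambda>_. 0))"
  define g where "g = (\<lambda>i::nat. if i = 0 then g0 else (\<lambda>_. 0))"
  have lpu: "lp_norm G p u = n powr (1/p)"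
    unfolding lp_norm_def
    by (subst fin_supp_infsum(1)[OF assms(3) Hc]) (auto simp: u_def n_def)
  have lpg: "lp_norm G q g0 = (n * (1/n) powr q) powr (1/q)"
    unfolding lp_norm_def
    by (subst fin_supp_infsum(1)[OF assms(3) Hc]) (auto simp: g0_def n_def norm_divide)
  also have "\<dots> = n powr (1/q) * (1/n)"
    using npos qpos by (simp add: powr_mult powr_powr)
  finally have lpg': "lp_norm G q g0 = n powr (1/q) * (1/n)" .
  have prod1: "lp_norm G p u * lp_norm G q g0 = 1"
    using npos q1 by (simp add: lpu lpg' powr_add[symmetric])
  have zero_norm: "lp_norm G r (\<lambda>_. 0) = 0" for r
    unfolding lp_norm_def by simp
  have seq: "(\<lambda>i. lp_norm G p (f i) * lp_norm G q (g i)) = (\<lambda>i. if i = 0 then 1 else 0)"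
    by (rule ext) (simp add: f_def g_def prod1 zero_norm)
  have conv0: "conv G g0 (check_fun G u) x = u x" if x: "x \<in> carrier G" for x
  proof -
    have "conv G g0 (check_fun G u) x = (\<Sum>y\<in>H. g0 y * check_fun G u (inv\<^bsub>G\<^esub> y \<otimes>\<^bsub>G\<^esub> x))"
      unfolding conv_def
      by (rule fin_supp_infsum(1)[OF assms(3) Hc]) (auto simp: g0_def)
    also have "\<dots> = (\<Sum>y\<in>H. complex_of_real (1/n) * u x)"
      using subgroup_fact[OF assms(1,2) x] by (intro sum.cong) (auto simp: g0_def check_fun_def u_def)
    also have "\<dots> = u x" using npos by (simp add: n_def)
    finally show ?thesis .
  qed
  have conv0z: "conv G (\<lambda>_. 0) h y = 0" for h y by (simp add: conv_def)
  have rep: "Ap_rep G p u f g"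
    unfolding Ap_rep_def Let_def q_def[symmetric]
  proof (intro conjI allI ballI)
    fix i
    show "in_lp G p (f i)" unfolding in_lp_def f_def
      by (rule fin_supp_infsum(2)[OF assms(3) Hc]) (auto simp: u_def)
    show "in_lp G q (g i)" unfolding in_lp_def g_def
      by (rule fin_supp_infsum(2)[OF assms(3) Hc]) (auto simp: g0_def)
  next
    show "summable (\<lambda>i. lp_norm G p (f i) * lp_norm G q (g i))"
      unfolding seq by (rule summable_finite[of "{0}"]) auto
  next
    fix x assume x: "x \<in> carrier G"
    have "(\<lambda>i. conv G (g i) (check_fun G (f i)) x) = (\<lambda>i. if i = 0 then u x else 0)"
      using conv0[OF x] by (intro ext) (auto simp: f_def g_def conv0z)
    then show "u x = (\<Sum>i. conv G (g i) (check_fun G (f i)) x)"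
      using sums_unique[OF sums_single[of 0 "\<lambda>_. u x"]] by simp
  qed
  have sum1: "(\<Sum>i. lp_norm G p (f i) * lp_norm G q (g i)) = 1"
    unfolding seq using sums_unique[OF sums_single[of 0 "\<lambda>_. 1::real"]] by simp
  let ?S = "{(\<Sum>i. lp_norm G p (f i) * lp_norm G (p / (p - 1)) (g i)) | f g. Ap_rep G p u f g}"
  have "1 \<in> ?S" unfolding mem_Collect_eq
    by (rule exI[of _ f], rule exI[of _ g]) (use rep sum1 in \<open>simp add: q_def\<close>)
  moreover have "bdd_below ?S"
  proof (rule bdd_belowI[of _ 0])
    fix s assume "s \<in> ?S"
    then obtain f g where s: "s = (\<Sum>i. lp_norm G p (f i) * lp_norm G (p / (p - 1)) (g i))"
      and r: "Ap_rep G p u f g" by blast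
    have "summable (\<lambda>i. lp_norm G p (f i) * lp_norm G (p / (p - 1)) (g i))"
      using r unfolding Ap_rep_def Let_def by blast
    then show "0 \<le> s" unfolding s by (intro suminf_nonneg) (auto intro: mult_nonneg_nonneg lp_norm_nonneg)
  qed
  ultimately show "Ap_norm G p u \<le> 1" unfolding Ap_norm_def by (rule cInf_lower)
qed

theorem corollary3p8:
  fixes G :: "('a, 'b) monoid_scheme" and p :: real
  assumes "group G"
    and "locally_finite_group G"
    and "1 < p"
    and "\<exists>C. \<forall>f. in_lp G 1 f \<and> Ap_norm G p f \<le> 1 \<longrightarrow> l1_norm G f \<le> C"
  shows "finite (carrier G)"
proof (rule ccontr)
  assume inf: "infinite (carrier G)"
  obtain C where C: "\<And>f. in_lp G 1 f \<and> Ap_norm G p f \<le> 1 \<longrightarrow> l1_norm G f \<le> C"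
    using assms(4) by blast
  obtain S where S: "finite S" "card S = Suc (nat \<lceil>C\<rceil>)" "S \<subseteq> carrier G"
    using infinite_arbitrarily_large[OF inf] by blast
  define H where "H = generate G S"
  have sg: "subgroup H G" unfolding H_def using group.generate_is_subgroup[OF assms(1) S(3)] .
  have fH: "finite H" using assms(2) S unfolding locally_finite_group_def H_def by blast
  have "S \<subseteq> H" unfolding H_def by (rule subsetI) (rule generate.incl)
  hence "card S \<le> card H" using fH card_mono by blast
  hence le1: "real (Suc (nat \<lceil>C\<rceil>)) \<le> real (card H)" using S(2) by simp
  let ?u = "(\<lambda>x. if x \<in> H then (1::complex) else 0)"
  have k: "in_lp G 1 ?u" "Ap_norm G p ?u \<le> 1" "l1_norm G ?u = real (card H)"
    using key[OF assms(1) sg fH assms(3)] by auto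
  have le2: "real (card H) \<le> C" using C[of ?u] k by simp
  have "C \<le> real (nat \<lceil>C\<rceil>)" by (rule real_nat_ceiling_ge)
  then show False using le1 le2 by linarith
qed

end
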